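(* At any time during the execution of DASH (described in the context) on an initially connected graph, for every surviving node $v$ and every $q\in N(v,G')$, we have $W(T(v,q))\ge \mathrm{rem}(v)$.
   Context: Model: a network is an undirected graph, initially a connected graph $G_0$ on $n$ nodes. In each round an adversary deletes one surviving node $v$ with its incident edges, and then DASH adds edges. $G$ is the current network; $E'$ is the set of healing edges added so far whose endpoints both survive; $G'=(V(G),E')$. $N(u,G)$, $N(u,G')$ are neighbor sets in $G$, $G'$; $\delta(u)=\deg_G(u)-\deg_{G_0}(u)$. DASH: initially every node receives an ID drawn independently and uniformly from $[0,1]$ (its initial ID). When $v$ is deleted (quantities evaluated just before the deletion): partition the nodes of $N(v,G)$ whose current ID differs from that of $v$ into classes of equal current ID; $UN(v,G)$ consists of one node per class, the one with lowest initial ID. Let $S=UN(v,G)\cup N(v,G')$. Order $S$ by increasing $\delta$ and place it in this order into a complete binary tree with $|S|$ positions, filled level by level from the top and left to right; add to the network and to $E'$ the edge between each node of $S$ and the node at its parent position. Then all nodes of the component of $G'$ containing $S$ set their ID to the minimum current ID in $S$. Weights: every node $u$ has weight $w(u)$, initially $1$; when a node $v$ is deleted, $w(v)$ is added to the weight of an arbitrarily chosen node of $N(v,G')$. For a subgraph $H$, $W(H)$ is the sum of the weights of its vertices. For distinct surviving nodes $x,y$, $T(x,y)$ is the connected component of $G'-y$ containing $x$. Define $\mathrm{rem}(v)=\sum_{u\in N(v,G')}W(T(u,v))-\max_{u\in N(v,G')}W(T(u,v))+w(v)$ (the maximum over the empty set being $0$). *)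

theory Defs
  imports Complex_Main
begin

definition nbr :: "'a set set \<Rightarrow> 'a \<Rightarrow> 'a set" where
  "nbr E u = {x. {u, x} \<in> E \<and> x \<noteq> u}"

definition edge_rel :: "'a set set \<Rightarrow> ('a \<times> 'a) set" where
  "edge_rel E = {(a, b). {a, b} \<in> E \<and> a \<noteq> b}"

definition comp :: "'a set \<Rightarrow> 'a set set \<Rightarrow> 'a \<Rightarrow> 'a set" where
  "comp A E x = {z \<in> A. (x, z) \<in> (edge_rel E \<inter> (A \<times> A))\<^sup>*}"

definition simple_graph :: "'a set \<Rightarrow> 'a set set \<Rightarrow> bool" where
  "simple_graph V E \<longleftrightarrow> finite V \<and> (\<forall>e\<in>E. \<exists>x y. e = {x, y} \<and> x \<noteq> y \<and> x \<in> V \<and> y \<in> V)"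

definition connected_graph :: "'a set \<Rightarrow> 'a set set \<Rightarrow> bool" where
  "connected_graph V E \<longleftrightarrow> simple_graph V E \<and> (\<forall>x\<in>V. \<forall>y\<in>V. y \<in> comp V E x)"

text \<open>State of the DASH process:
  alive = V(G), edges = E(G), heal = E' (healing edges with both endpoints alive),
  cid = current IDs, wt = weights.\<close>
record 'a dash_state =
  alive :: "'a set"
  edges :: "'a set set"
  heal  :: "'a set set"
  cid   :: "'a \<Rightarrow> real"
  wt    :: "'a \<Rightarrow> nat"

definition dash_init :: "'a set \<Rightarrow> 'a set set \<Rightarrow> ('a \<Rightarrow> real) \<Rightarrow> 'a dash_state" where
  "dash_init V0 E0 iid = \<lparr>alive = V0, edges = E0, heal = {}, cid = iid, wt = (\<lambda>_. 1)\<rparr>"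

definition delta :: "'a set set \<Rightarrow> 'a dash_state \<Rightarrow> 'a \<Rightarrow> int" where
  "delta E0 s u = int (card (nbr (edges s) u)) - int (card (nbr E0 u))"

definition UNs :: "('a \<Rightarrow> real) \<Rightarrow> 'a dash_state \<Rightarrow> 'a \<Rightarrow> 'a set" where
  "UNs iid s v = {u \<in> nbr (edges s) v. cid s u \<noteq> cid s v \<and>
      (\<forall>u' \<in> nbr (edges s) v. cid s u' = cid s u \<longrightarrow> iid u \<le> iid u')}"

definition Sset :: "('a \<Rightarrow> real) \<Rightarrow> 'a dash_state \<Rightarrow> 'a \<Rightarrow> 'a set" where
  "Sset iid s v = UNs iid s v \<union> nbr (heal s) v"

text \<open>Edges of the complete binary tree whose positions 1..length L are filled
  (level by level, left to right) by the list L: position p \<ge> 2 is joined to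
  position p div 2. With 0-based list indices, index i > 0 is joined to index
  (i+1) div 2 - 1.\<close>
definition tree_edges :: "'a list \<Rightarrow> 'a set set" where
  "tree_edges L = {{L ! i, L ! ((i + 1) div 2 - 1)} | i. 0 < i \<and> i < length L}"

text \<open>One round: the adversary deletes v (an arbitrary surviving node), S is ordered by
  increasing delta (ties in arbitrary order: any sorted listing L), the tree edges are added,
  the IDs of the component of G' containing S are updated, and the weight of v is moved to
  an arbitrarily chosen node u of N(v,G') (if that set is nonempty).\<close>
definition dash_step :: "'a set set \<Rightarrow> ('a \<Rightarrow> real) \<Rightarrow> 'a dash_state \<Rightarrow> 'a dash_state \<Rightarrow> bool" where
  "dash_step E0 iid s s' \<longleftrightarrow>
    (\<exists>v L. v \<in> alive s \<and>
       distinct L \<and> set L = Sset iid s v \<and> sorted (map (delta E0 s) L) \<and>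
       (let A' = alive s - {v};
            E' = {e \<in> edges s. v \<notin> e} \<union> tree_edges L;
            H' = {e \<in> heal s. v \<notin> e} \<union> tree_edges L;
            S = Sset iid s v;
            C = (\<Union>x\<in>S. comp A' H' x);
            m = Min (cid s ` S)
        in alive s' = A' \<and> edges s' = E' \<and> heal s' = H' \<and>
           cid s' = (\<lambda>x. if x \<in> C then m else cid s x) \<and>
           (if nbr (heal s) v = {} then wt s' = wt s
            else (\<exists>u \<in> nbr (heal s) v. wt s' = (wt s)(u := wt s u + wt s v)))))"

definition dash_reachable :: "'a set \<Rightarrow> 'a set set \<Rightarrow> ('a \<Rightarrow> real) \<Rightarrow> 'a dash_state \<Rightarrow> bool" where
  "dash_reachable V0 E0 iid s \<longleftrightarrow> (dash_step E0 iid)\<^sup>*\<^sup>* (dash_init V0 E0 iid) s"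

definition Tcomp :: "'a dash_state \<Rightarrow> 'a \<Rightarrow> 'a \<Rightarrow> 'a set" where
  "Tcomp s x y = comp (alive s - {y}) (heal s) x"

definition Wt :: "'a dash_state \<Rightarrow> 'a set \<Rightarrow> nat" where
  "Wt s X = (\<Sum>z\<in>X. wt s z)"

definition rem :: "'a dash_state \<Rightarrow> 'a \<Rightarrow> nat" where
  "rem s v = (\<Sum>u\<in>nbr (heal s) v. Wt s (Tcomp s u v))
             - Max (insert 0 ((\<lambda>u. Wt s (Tcomp s u v)) ` nbr (heal s) v)) + wt s v"

end

theory Submission
  imports Defs
begin


definition forest :: "'a set set \<Rightarrow> bool" where
  "forest H \<longleftrightarrow> (\<forall>a b. {a,b} \<in> H \<longrightarrow> a \<noteq> b \<longrightarrow> (a,b) \<notin> (edge_rel (H - {{a,b}}))\<^sup>*)"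

lemma sym_edge_rel: "sym (edge_rel E)"
  by (auto simp: sym_def edge_rel_def insert_commute)

lemma edge_rel_sym: "(a,b) \<in> edge_rel E \<Longrightarrow> (b,a) \<in> edge_rel E"
  by (auto simp: edge_rel_def insert_commute)

lemma rtrancl_edge_sym: "(a,b) \<in> (edge_rel E)\<^sup>* \<Longrightarrow> (b,a) \<in> (edge_rel E)\<^sup>*"
  by (meson sym_edge_rel sym_rtrancl symD)

lemma rtrancl_edge_sym2: "(a,b) \<in> (edge_rel E \<inter> B \<times> B)\<^sup>* \<Longrightarrow> (b,a) \<in> (edge_rel E \<inter> B \<times> B)\<^sup>*"
proof -
  have "sym (edge_rel E \<inter> B \<times> B)" by (auto simp: sym_def edge_rel_def insert_commute)
  then show "(a,b) \<in> (edge_rel E \<inter> B \<times> B)\<^sup>* \<Longrightarrow> ?thesis" by (meson sym_rtrancl symD)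
qed

lemma edge_rel_mono: "E \<subseteq> F \<Longrightarrow> edge_rel E \<subseteq> edge_rel F"
  by (auto simp: edge_rel_def)

lemma edge_rel_Un: "edge_rel (E \<union> F) = edge_rel E \<union> edge_rel F"
  by (auto simp: edge_rel_def)

lemma edge_rel_iff: "(a,b) \<in> edge_rel E \<longleftrightarrow> {a,b} \<in> E \<and> a \<noteq> b"
  by (auto simp: edge_rel_def)

lemma forest_mono: assumes "forest H" "H0 \<subseteq> H" shows "forest H0"
  unfolding forest_def
proof (intro allI impI)
  fix a b assume ab: "{a,b} \<in> H0" "a \<noteq> b"
  have "(edge_rel (H0 - {{a,b}}))\<^sup>* \<subseteq> (edge_rel (H - {{a,b}}))\<^sup>*"
    by (intro rtrancl_mono edge_rel_mono) (use assms in auto)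
  then show "(a,b) \<notin> (edge_rel (H0 - {{a,b}}))\<^sup>*"
    using assms ab unfolding forest_def by blast
qed

definition par :: "nat \<Rightarrow> nat" where "par j = (j+1) div 2 - 1"

lemma par_le: "par j \<le> j" by (simp add: par_def)
lemma par_less: "0 < j \<Longrightarrow> par j < j" by (simp add: par_def)
lemma funpow_par_le: "(par ^^ k) j \<le> j"
  by (induction k) (auto intro: order_trans[OF par_le])

lemma tree_edges_par: "tree_edges L = {{L!i, L!(par i)} | i. 0<i \<and> i<length L}"
  by (simp add: tree_edges_def par_def)

lemma tree_forest: assumes dist: "distinct L" shows "forest (tree_edges L)"
  unfolding forest_def
proof (intro allI impI)
  fix a b assume ab: "{a,b} \<in> tree_edges L" "a \<noteq> b"
  then obtain i where i: "0<i" "i<length L" "{a,b} = {L!i, L!(par i)}"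
    by (auto simp: tree_edges_par)
  define R where "R = edge_rel (tree_edges L - {{a,b}})"
  have key: "\<exists>j<length L. x = L!j \<and> (\<exists>k. (par^^k) j = i)" if "(L!i, x) \<in> R\<^sup>*" for x
    using that
  proof (induction rule: rtrancl_induct)
    case base
    then show ?case using i by (metis funpow_0)
  next
    case (step y z)
    then obtain j k where j: "j < length L" "y = L!j" "(par^^k) j = i" by blast
    from step(2) have yz: "{y,z} \<in> tree_edges L" "{y,z} \<noteq> {a,b}" "y \<noteq> z"
      by (auto simp: R_def edge_rel_iff)
    then obtain j' where j': "0<j'" "j'<length L" "{y,z} = {L!j', L!(par j')}"
      by (auto simp: tree_edges_par)
    have "j' \<noteq> i" using yz(2) j'(3) i(3) by auto
    have pl: "par j' < length L" using par_le[of j'] j' by linarith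
    show ?case
    proof (cases "y = L!j'")
      case True
      then have "j = j'" using j dist j' by (simp add: nth_eq_iff_index_eq)
      then have "k \<noteq> 0" using \<open>j' \<noteq> i\<close> j by (metis funpow_0)
      then obtain k' where "k = Suc k'" by (cases k) auto
      then have "(par^^k') (par j') = i" using j \<open>j = j'\<close> by (metis funpow_Suc_right comp_apply)
      moreover have "z = L!(par j')" using True j'(3) yz(3) by (auto simp: doubleton_eq_iff)
      ultimately show ?thesis using pl by blast
    next
      case False
      then have "y = L!(par j')" "z = L!j'" using j'(3) by (auto simp: doubleton_eq_iff)
      then have "j = par j'" using j dist pl by (simp add: nth_eq_iff_index_eq)
      then have "(par^^(Suc k)) j' = i" using j by (metis funpow_Suc_right comp_apply)
      then show ?thesis using \<open>z = L!j'\<close> j' by blast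
    qed
  qed
  have pil: "par i < length L" using par_le[of i] i by linarith
  have notin: "(L!i, L!(par i)) \<notin> R\<^sup>*"
  proof
    assume "(L!i, L!(par i)) \<in> R\<^sup>*"
    from key[OF this] obtain j k where "j < length L" "L!(par i) = L!j" "(par^^k) j = i" by blast
    then have "j = par i" using dist pil by (simp add: nth_eq_iff_index_eq)
    then have "(par^^k) (par i) = i" using \<open>(par^^k) j = i\<close> by simp
    moreover have "(par^^k) (par i) \<le> par i" by (rule funpow_par_le)
    ultimately show False using par_less[OF i(1)] by linarith
  qed
  show "(a,b) \<notin> (edge_rel (tree_edges L - {{a,b}}))\<^sup>*"
  proof
    assume h: "(a,b) \<in> (edge_rel (tree_edges L - {{a,b}}))\<^sup>*"
    then have h': "(b,a) \<in> R\<^sup>*" unfolding R_def by (rule rtrancl_edge_sym)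
    from i(3) have "(a = L!i \<and> b = L!(par i)) \<or> (b = L!i \<and> a = L!(par i))"
      by (auto simp: doubleton_eq_iff)
    then show False using h h' notin unfolding R_def by auto
  qed
qed


lemma merge_forest:
  assumes fH: "forest H0" and fT: "forest T"
    and TS: "\<forall>e\<in>T. \<exists>x y. e = {x,y} \<and> x \<in> S \<and> y \<in> S"
    and dS: "\<forall>x\<in>S. \<forall>y\<in>S. (x,y) \<in> (edge_rel H0)\<^sup>* \<longrightarrow> x = y"
  shows "forest (H0 \<union> T)"
  unfolding forest_def
proof (intro allI impI notI)
  fix a b assume ab: "{a,b} \<in> H0 \<union> T" "a \<noteq> b"
    and p: "(a,b) \<in> (edge_rel (H0 \<union> T - {{a,b}}))\<^sup>*"
  define e where "e = {a,b}"
  define R0 where "R0 = edge_rel H0"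
  have split: "edge_rel (H0 \<union> T - {e}) = edge_rel (H0 - {e}) \<union> edge_rel (T - {e})"
    by (simp add: Un_Diff edge_rel_Un)
  have R0e: "edge_rel (H0 - {e}) \<subseteq> R0" unfolding R0_def by (rule edge_rel_mono) auto
  have Tedge: "x \<in> S \<and> y \<in> S" if "(x,y) \<in> edge_rel (T - {e})" for x y
  proof -
    from that have "{x,y} \<in> T" by (auto simp: edge_rel_iff)
    with TS obtain x' y' where "{x,y} = {x',y'}" "x' \<in> S" "y' \<in> S" by blast
    then show ?thesis by (auto simp: doubleton_eq_iff)
  qed
  show False
  proof (cases "e \<in> T")
    case True
    have ab_S: "a \<in> S" "b \<in> S"
    proof -
      from TS True obtain x' y' where "e = {x',y'}" "x' \<in> S" "y' \<in> S" by blast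
      then show "a \<in> S" "b \<in> S" unfolding e_def by (auto simp: doubleton_eq_iff)
    qed
    have claim: "\<exists>s\<in>S. (x,s) \<in> R0\<^sup>* \<and> (a,s) \<in> (edge_rel (T - {e}))\<^sup>*"
      if "(a,x) \<in> (edge_rel (H0 \<union> T - {e}))\<^sup>*" for x
      using that
    proof (induction rule: rtrancl_induct)
      case base
      then show ?case using ab_S by blast
    next
      case (step y z)
      then obtain s where s: "s \<in> S" "(y,s) \<in> R0\<^sup>*" "(a,s) \<in> (edge_rel (T - {e}))\<^sup>*" by blast
      from step(2) split consider "(y,z) \<in> edge_rel (H0 - {e})" | "(y,z) \<in> edge_rel (T - {e})" by auto
      then show ?case
      proof cases
        case 1
        have "(y,z) \<in> R0" using 1 R0e by blast
        then have zy: "(z,y) \<in> R0" unfolding R0_def by (rule edge_rel_sym)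
        show ?thesis using s(1) converse_rtrancl_into_rtrancl[OF zy s(2)] s(3) by blast
      next
        case 2
        then have "y \<in> S" "z \<in> S" using Tedge by auto
        then have "y = s" using dS s unfolding R0_def by blast
        then have "(a,z) \<in> (edge_rel (T - {e}))\<^sup>*" using s 2 by simp
        then show ?thesis using \<open>z \<in> S\<close> by blast
      qed
    qed
    from claim[OF p[folded e_def]] obtain s where "s \<in> S" "(b,s) \<in> R0\<^sup>*" "(a,s) \<in> (edge_rel (T - {e}))\<^sup>*"
      by blast
    then have "b = s" using dS ab_S unfolding R0_def by blast
    then have "(a,b) \<in> (edge_rel (T - {{a,b}}))\<^sup>*" using \<open>(a,s) \<in> _\<close> e_def by simp
    then show False using fT True ab(2) unfolding forest_def e_def by blast
  next
    case False
    then have eH: "e \<in> H0" using ab e_def by auto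
    define K where "K = {z. (a,z) \<in> R0\<^sup>*}"
    have claim: "(x \<in> K \<longrightarrow> (a,x) \<in> (edge_rel (H0 - {e}))\<^sup>*) \<and>
        (x \<notin> K \<longrightarrow> (\<exists>s\<in>S. s \<in> K \<and> (a,s) \<in> (edge_rel (H0 - {e}))\<^sup>*))"
      if "(a,x) \<in> (edge_rel (H0 \<union> T - {e}))\<^sup>*" for x
      using that
    proof (induction rule: rtrancl_induct)
      case base
      then show ?case by (simp add: K_def)
    next
      case (step y z)
      from step(2) split consider "(y,z) \<in> edge_rel (H0 - {e})" | "(y,z) \<in> edge_rel (T - {e})" by auto
      then show ?case
      proof cases
        case 1
        have yz1: "(y,z) \<in> R0" using 1 R0e by blast
        then have yz2: "(z,y) \<in> R0" unfolding R0_def by (rule edge_rel_sym)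
        have "y \<in> K \<longleftrightarrow> z \<in> K" unfolding K_def
          using rtrancl.rtrancl_into_rtrancl[OF _ yz1] rtrancl.rtrancl_into_rtrancl[OF _ yz2] by blast
        then show ?thesis using step(3) rtrancl.rtrancl_into_rtrancl[OF _ 1] by blast
      next
        case 2
        then have S: "y \<in> S" "z \<in> S" "y \<noteq> z" using Tedge by (auto simp: edge_rel_iff)
        have notboth: "\<not> (y \<in> K \<and> z \<in> K)"
        proof
          assume "y \<in> K \<and> z \<in> K"
          then have "(a,y) \<in> R0\<^sup>*" "(a,z) \<in> R0\<^sup>*" unfolding K_def by auto
          then have "(y,z) \<in> R0\<^sup>*" unfolding R0_def by (meson rtrancl_edge_sym rtrancl_trans)
          then show False using dS S unfolding R0_def by blast
        qed
        show ?thesis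
        proof (cases "y \<in> K")
          case True
          then have "z \<notin> K" using notboth by blast
          then show ?thesis using True S step(3) by blast
        next
          case yK: False
          then obtain s where s: "s \<in> S" "s \<in> K" "(a,s) \<in> (edge_rel (H0 - {e}))\<^sup>*" using step(3) by blast
          show ?thesis
          proof (cases "z \<in> K")
            case True
            have "(a,z) \<in> R0\<^sup>*" "(a,s) \<in> R0\<^sup>*" using True s(2) unfolding K_def by auto
            then have "(z,s) \<in> R0\<^sup>*" unfolding R0_def by (meson rtrancl_edge_sym rtrancl_trans)
            then have "z = s" using dS S s unfolding R0_def by blast
            then show ?thesis using s by blast
          next
            case False
            then show ?thesis using s by blast
          qed
        qed
      qed
    qed
    have "(a,b) \<in> R0" using eH ab(2) unfolding R0_def e_def by (simp add: edge_rel_iff)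
    then have "b \<in> K" unfolding K_def by simp
    with claim[OF p[folded e_def]] have "(a,b) \<in> (edge_rel (H0 - {{a,b}}))\<^sup>*" unfolding e_def by blast
    then show False using fH eH ab(2) unfolding forest_def e_def by blast
  qed
qed




definition Inv :: "'a set \<Rightarrow> ('a \<Rightarrow> real) \<Rightarrow> 'a dash_state \<Rightarrow> bool" where
  "Inv V0 iid s \<longleftrightarrow> alive s \<subseteq> V0 \<and>
     (\<forall>e\<in>edges s. \<exists>x y. e = {x,y} \<and> x \<noteq> y \<and> x \<in> alive s \<and> y \<in> alive s) \<and>
     (\<forall>e\<in>heal s. \<exists>x y. e = {x,y} \<and> x \<noteq> y \<and> x \<in> alive s \<and> y \<in> alive s) \<and>
     forest (heal s) \<and>
     (\<forall>x y. (x,y) \<in> (edge_rel (heal s))\<^sup>* \<longrightarrow> cid s x = cid s y)"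

lemma Inv_init: "simple_graph V0 E0 \<Longrightarrow> Inv V0 iid (dash_init V0 E0 iid)"
  by (auto simp: Inv_def dash_init_def simple_graph_def forest_def edge_rel_def)

lemma nbr_alive: "(\<forall>e\<in>E. \<exists>x y. e = {x,y} \<and> x \<noteq> y \<and> x \<in> A \<and> y \<in> A) \<Longrightarrow> v \<in> A \<Longrightarrow>
   nbr E v \<subseteq> A - {v}"
  unfolding nbr_def by (auto simp: doubleton_eq_iff)

lemma ein_mono:
  assumes "\<forall>e\<in>E. \<exists>x y. e = {x,y} \<and> x \<noteq> y \<and> x \<in> A \<and> y \<in> A" "A \<subseteq> B"
  shows "\<forall>e\<in>E. \<exists>x y. e = {x,y} \<and> x \<noteq> y \<and> x \<in> B \<and> y \<in> B"
proof
  fix e assume "e \<in> E"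
  then obtain x y where "e = {x,y}" "x \<noteq> y" "x \<in> A" "y \<in> A" using assms(1) by blast
  then show "\<exists>x y. e = {x,y} \<and> x \<noteq> y \<and> x \<in> B \<and> y \<in> B" using assms(2) by blast
qed

lemma ein_Un:
  assumes "\<forall>e\<in>E. \<exists>x y. e = {x,y} \<and> x \<noteq> y \<and> x \<in> A \<and> y \<in> A"
    "\<forall>e\<in>F. \<exists>x y. e = {x,y} \<and> x \<noteq> y \<and> x \<in> A \<and> y \<in> A"
  shows "\<forall>e\<in>E \<union> F. \<exists>x y. e = {x,y} \<and> x \<noteq> y \<and> x \<in> A \<and> y \<in> A"
proof
  fix e assume "e \<in> E \<union> F"
  then show "\<exists>x y. e = {x,y} \<and> x \<noteq> y \<and> x \<in> A \<and> y \<in> A"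
  proof
    assume "e \<in> E" then show ?thesis using assms(1) by blast
  next
    assume "e \<in> F" then show ?thesis using assms(2) by blast
  qed
qed

lemma step_inv:
  assumes inj: "inj_on iid V0" and I: "Inv V0 iid s" and st: "dash_step E0 iid s s'"
  shows "Inv V0 iid s'"
proof -
  define H where "H = heal s"
  from st obtain v L where v: "v \<in> alive s" "distinct L" "set L = Sset iid s v"
    and al: "alive s' = alive s - {v}"
    and ed: "edges s' = {e \<in> edges s. v \<notin> e} \<union> tree_edges L"
    and he: "heal s' = {e \<in> heal s. v \<notin> e} \<union> tree_edges L"
    and ci: "cid s' = (\<lambda>x. if x \<in> (\<Union>x\<in>Sset iid s v. comp (alive s - {v}) ({e \<in> heal s. v \<notin> e} \<union> tree_edges L) x)
                  then Min (cid s ` Sset iid s v) else cid s x)"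
    using st unfolding dash_step_def Let_def
    apply (elim exE conjE)
    apply (rule that)
    apply assumption+
    done
  define A' where "A' = alive s - {v}"
  define H0 where "H0 = {e \<in> H. v \<notin> e}"
  define T where "T = tree_edges L"
  define S where "S = Sset iid s v"
  define C where "C = (\<Union>x\<in>S. comp A' (H0 \<union> T) x)"
  define m where "m = Min (cid s ` S)"
  have he': "heal s' = H0 \<union> T" using he unfolding H0_def H_def T_def .
  have ci': "cid s' = (\<lambda>x. if x \<in> C then m else cid s x)"
    using ci unfolding C_def m_def S_def A'_def H0_def T_def H_def .
  have Ealive: "\<forall>e\<in>edges s. \<exists>x y. e = {x,y} \<and> x \<noteq> y \<and> x \<in> alive s \<and> y \<in> alive s"
    and Halive: "\<forall>e\<in>H. \<exists>x y. e = {x,y} \<and> x \<noteq> y \<and> x \<in> alive s \<and> y \<in> alive s"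
    and fH: "forest H" and cidH: "\<forall>x y. (x,y) \<in> (edge_rel H)\<^sup>* \<longrightarrow> cid s x = cid s y"
    and AV: "alive s \<subseteq> V0"
    using I unfolding Inv_def H_def by auto
  have SA: "S \<subseteq> A'"
    using nbr_alive[OF Ealive v(1)] nbr_alive[OF Halive v(1)]
    unfolding S_def Sset_def UNs_def A'_def H_def by auto
  have TS: "\<forall>e\<in>T. \<exists>x y. e = {x,y} \<and> x \<noteq> y \<and> x \<in> S \<and> y \<in> S"
  proof
    fix e assume "e \<in> T"
    then obtain i where i: "0<i" "i<length L" "e = {L!i, L!(par i)}"
      unfolding T_def tree_edges_par by blast
    have pl: "par i < length L" using par_le[of i] i by linarith
    have "L!i \<noteq> L!(par i)" using v(2) i pl par_less[OF i(1)] by (simp add: nth_eq_iff_index_eq)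
    moreover have "L!i \<in> S" "L!(par i) \<in> S" using nth_mem[OF i(2)] nth_mem[OF pl] v(3) unfolding S_def by auto
    ultimately show "\<exists>x y. e = {x,y} \<and> x \<noteq> y \<and> x \<in> S \<and> y \<in> S" using i by blast
  qed
  have H0alive: "\<forall>e\<in>H0. \<exists>x y. e = {x,y} \<and> x \<noteq> y \<and> x \<in> A' \<and> y \<in> A'"
  proof
    fix e assume "e \<in> H0"
    then have "e \<in> H" "v \<notin> e" by (auto simp: H0_def)
    with Halive obtain x y where "e = {x,y}" "x \<noteq> y" "x \<in> alive s" "y \<in> alive s" by blast
    then show "\<exists>x y. e = {x,y} \<and> x \<noteq> y \<and> x \<in> A' \<and> y \<in> A'"
      using \<open>v \<notin> e\<close> unfolding A'_def by blast
  qed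
  have H'alive: "\<forall>e\<in>H0 \<union> T. \<exists>x y. e = {x,y} \<and> x \<noteq> y \<and> x \<in> A' \<and> y \<in> A'"
    by (rule ein_Un[OF H0alive ein_mono[OF TS SA]])
  have E'alive: "\<forall>e\<in>edges s'. \<exists>x y. e = {x,y} \<and> x \<noteq> y \<and> x \<in> alive s' \<and> y \<in> alive s'"
  proof -
    have "\<forall>e\<in>{e \<in> edges s. v \<notin> e}. \<exists>x y. e = {x,y} \<and> x \<noteq> y \<and> x \<in> A' \<and> y \<in> A'"
    proof
      fix e assume "e \<in> {e \<in> edges s. v \<notin> e}"
      then have "e \<in> edges s" "v \<notin> e" by auto
      with Ealive obtain x y where "e = {x,y}" "x \<noteq> y" "x \<in> alive s" "y \<in> alive s" by blast
      then show "\<exists>x y. e = {x,y} \<and> x \<noteq> y \<and> x \<in> A' \<and> y \<in> A'"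
        using \<open>v \<notin> e\<close> unfolding A'_def by blast
    qed
    then show ?thesis unfolding ed al A'_def[symmetric] T_def[symmetric]
      by (rule ein_Un[OF _ ein_mono[OF TS SA]])
  qed
  have R0H: "edge_rel H0 \<subseteq> edge_rel H" by (rule edge_rel_mono) (auto simp: H0_def)
  have nbrcid: "cid s u = cid s v" if "u \<in> nbr H v" for u
  proof -
    have "(v,u) \<in> edge_rel H" using that by (auto simp: nbr_def edge_rel_iff)
    then show ?thesis using cidH by (metis r_into_rtrancl)
  qed
  have dS: "\<forall>x\<in>S. \<forall>y\<in>S. (x,y) \<in> (edge_rel H0)\<^sup>* \<longrightarrow> x = y"
  proof (intro ballI impI)
    fix x y assume xS: "x \<in> S" and yS: "y \<in> S" and p: "(x,y) \<in> (edge_rel H0)\<^sup>*"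
    have cxy: "cid s x = cid s y" using p rtrancl_mono[OF R0H] cidH by blast
    show "x = y"
    proof (rule ccontr)
      assume xy: "x \<noteq> y"
      consider "x \<in> nbr H v" "y \<in> nbr H v" | "x \<in> UNs iid s v" | "y \<in> UNs iid s v"
        using xS yS unfolding S_def Sset_def H_def by blast
      then show False
      proof cases
        case 1
        define e where "e = {v,x}"
        have eH: "e \<in> H" "v \<noteq> x" using 1 by (auto simp: nbr_def e_def insert_commute)
        have "(v,y) \<in> edge_rel (H - {e})" using 1 xy by (auto simp: nbr_def edge_rel_iff e_def doubleton_eq_iff)
        moreover have "(y,x) \<in> (edge_rel H0)\<^sup>*" using p by (rule rtrancl_edge_sym)
        moreover have "edge_rel H0 \<subseteq> edge_rel (H - {e})" by (rule edge_rel_mono) (auto simp: H0_def e_def)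
        ultimately have "(v,x) \<in> (edge_rel (H - {e}))\<^sup>*"
          by (meson converse_rtrancl_into_rtrancl rtrancl_mono subsetD)
        then show False using fH eH unfolding forest_def e_def by blast
      next
        case 2
        then have "cid s x \<noteq> cid s v" by (simp add: UNs_def)
        show False
        proof (cases "y \<in> UNs iid s v")
          case True
          have "iid x \<le> iid y" "iid y \<le> iid x" "x \<in> V0" "y \<in> V0"
            using 2 True cxy SA AV xS yS unfolding UNs_def A'_def by auto
          then show False using inj xy by (meson antisym inj_onD)
        next
          case False
          then have "y \<in> nbr H v" using yS unfolding S_def Sset_def H_def by blast
          then show False using nbrcid cxy \<open>cid s x \<noteq> cid s v\<close> by simp
        qed
      next
        case 3
        then have "cid s y \<noteq> cid s v" by (simp add: UNs_def)
        show False
        proof (cases "x \<in> UNs iid s v")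
          case True
          have "iid x \<le> iid y" "iid y \<le> iid x" "x \<in> V0" "y \<in> V0"
            using 3 True cxy SA AV xS yS unfolding UNs_def A'_def by auto
          then show False using inj xy by (meson antisym inj_onD)
        next
          case False
          then have "x \<in> nbr H v" using xS unfolding S_def Sset_def H_def by blast
          then show False using nbrcid cxy \<open>cid s y \<noteq> cid s v\<close> by simp
        qed
      qed
    qed
  qed
  have fH0: "forest H0" using fH by (rule forest_mono) (auto simp: H0_def)
  have fH': "forest (H0 \<union> T)"
  proof -
    have TS2: "\<forall>e\<in>T. \<exists>x y. e = {x,y} \<and> x \<in> S \<and> y \<in> S"
    proof
      fix e assume "e \<in> T"
      then obtain x y where "e = {x,y}" "x \<in> S" "y \<in> S" using TS by blast
      then show "\<exists>x y. e = {x,y} \<and> x \<in> S \<and> y \<in> S" by blast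
    qed
    show ?thesis using merge_forest[OF fH0 tree_forest[OF v(2), folded T_def] TS2 dS] .
  qed
  have endsA: "z \<in> A' \<and> y \<in> A'" if "(z,y) \<in> edge_rel (H0 \<union> T)" for z y
  proof -
    from that have "{z,y} \<in> H0 \<union> T" by (auto simp: edge_rel_iff)
    with H'alive obtain x' y' where "{z,y} = {x',y'}" "x' \<in> A'" "y' \<in> A'" by blast
    then show ?thesis by (auto simp: doubleton_eq_iff)
  qed
  have Cclosed: "y \<in> C" if "z \<in> C" "(z,y) \<in> edge_rel (H0 \<union> T)" for z y
  proof -
    from that(1) obtain w where w: "w \<in> S" "z \<in> A'" "(w,z) \<in> (edge_rel (H0 \<union> T) \<inter> A' \<times> A')\<^sup>*"
      unfolding C_def comp_def by blast
    have "(z,y) \<in> edge_rel (H0 \<union> T) \<inter> A' \<times> A'" using that(2) endsA[OF that(2)] by blast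
    then have "(w,y) \<in> (edge_rel (H0 \<union> T) \<inter> A' \<times> A')\<^sup>*" using w(3) by (meson rtrancl.rtrancl_into_rtrancl)
    then show ?thesis using w(1) endsA[OF that(2)] unfolding C_def comp_def by blast
  qed
  have SC: "S \<subseteq> C" using SA unfolding C_def comp_def by blast
  have cid': "\<forall>x y. (x,y) \<in> (edge_rel (H0 \<union> T))\<^sup>* \<longrightarrow> cid s' x = cid s' y"
  proof (intro allI impI)
    fix x y assume "(x,y) \<in> (edge_rel (H0 \<union> T))\<^sup>*"
    then show "cid s' x = cid s' y"
    proof (induction rule: rtrancl_induct)
      case base then show ?case by simp
    next
      case (step z y)
      have zy2: "(y,z) \<in> edge_rel (H0 \<union> T)" using step(2) by (rule edge_rel_sym)
      show ?case
      proof (cases "z \<in> C")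
        case True
        then have "y \<in> C" using Cclosed step(2) by blast
        then show ?thesis using True step(3) ci' by simp
      next
        case False
        then have yC: "y \<notin> C" using Cclosed zy2 by blast
        have "(z,y) \<in> edge_rel H0 \<or> (z,y) \<in> edge_rel T" using step(2) by (simp add: edge_rel_Un)
        moreover have "(z,y) \<notin> edge_rel T"
        proof
          assume "(z,y) \<in> edge_rel T"
          then have "{z,y} \<in> T" by (auto simp: edge_rel_iff)
          with TS obtain x' y' where "{z,y} = {x',y'}" "x' \<in> S" "y' \<in> S" by blast
          then have "z \<in> S" by (auto simp: doubleton_eq_iff)
          then show False using SC False by blast
        qed
        ultimately have "(z,y) \<in> edge_rel H" using R0H by blast
        then have "cid s z = cid s y" using cidH by (metis r_into_rtrancl)
        then show ?thesis using False yC step(3) ci' by simp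
      qed
    qed
  qed
  have "alive s' \<subseteq> V0" using AV al by auto
  moreover have "\<forall>e\<in>heal s'. \<exists>x y. e = {x,y} \<and> x \<noteq> y \<and> x \<in> alive s' \<and> y \<in> alive s'"
    using H'alive unfolding he' al A'_def .
  ultimately show ?thesis unfolding Inv_def using E'alive fH' cid' unfolding he' by blast
qed



lemma reach_inv:
  assumes "simple_graph V0 E0" "inj_on iid V0" "dash_reachable V0 E0 iid s"
  shows "Inv V0 iid s"
  using assms(3) unfolding dash_reachable_def
proof (induction rule: rtranclp_induct)
  case base
  then show ?case using Inv_init[OF assms(1)] .
next
  case (step y z)
  then show ?case using step_inv[OF assms(2)] by blast
qed

theorem lemma3:
  fixes V0 :: "'a set" and E0 :: "'a set set" and iid :: "'a \<Rightarrow> real"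
    and s :: "'a dash_state" and v q :: 'a
  assumes "connected_graph V0 E0"
    and "inj_on iid V0" and "\<forall>x\<in>V0. 0 \<le> iid x \<and> iid x \<le> 1"
    and "dash_reachable V0 E0 iid s"
    and "v \<in> alive s" and "q \<in> nbr (heal s) v"
  shows "Wt s (Tcomp s v q) \<ge> rem s v"
proof -
  have sg: "simple_graph V0 E0" using assms(1) by (simp add: connected_graph_def)
  have I: "Inv V0 iid s" using reach_inv[OF sg assms(2,4)] .
  define A where "A = alive s"
  define H where "H = heal s"
  define N where "N = nbr H v"
  define B where "B = A - {v}"
  define RB where "RB = edge_rel H \<inter> B \<times> B"
  have AV: "A \<subseteq> V0" and Halive: "\<forall>e\<in>H. \<exists>x y. e = {x,y} \<and> x \<noteq> y \<and> x \<in> A \<and> y \<in> A"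
    and fH: "forest H" using I unfolding Inv_def A_def H_def by auto
  have finA: "finite A" using AV sg finite_subset unfolding simple_graph_def by blast
  have NA: "N \<subseteq> A - {v}" unfolding N_def using nbr_alive[OF Halive] assms(5) A_def by blast
  have finN: "finite N" using NA finA finite_subset by blast
  have qN: "q \<in> N" using assms(6) unfolding N_def H_def .
  have Tc: "Tcomp s x y = {z \<in> A - {y}. (x,z) \<in> (edge_rel H \<inter> (A - {y}) \<times> (A - {y}))\<^sup>*}" for x y
    unfolding Tcomp_def comp_def A_def H_def ..
  have P: "u' \<notin> Tcomp s u v" if "u \<in> N" "u' \<in> N" "u \<noteq> u'" for u u'
  proof
    assume "u' \<in> Tcomp s u v"
    then have p: "(u,u') \<in> RB\<^sup>*" unfolding Tc RB_def B_def by blast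
    define e where "e = {v,u}"
    have eH: "{v,u} \<in> H" "v \<noteq> u" using that(1) unfolding N_def nbr_def by (auto simp: insert_commute)
    have "(v,u') \<in> edge_rel (H - {e})" using that unfolding N_def nbr_def e_def
      by (auto simp: edge_rel_iff doubleton_eq_iff)
    moreover have "(u',u) \<in> RB\<^sup>*" using p unfolding RB_def by (rule rtrancl_edge_sym2)
    moreover have "RB \<subseteq> edge_rel (H - {e})"
      unfolding RB_def B_def e_def by (auto simp: edge_rel_iff doubleton_eq_iff)
    ultimately have "(v,u) \<in> (edge_rel (H - {e}))\<^sup>*"
      by (meson converse_rtrancl_into_rtrancl rtrancl_mono subsetD)
    then show False using fH eH unfolding forest_def e_def by blast
  qed
  define Q where "Q = A - {q}"
  define RQ where "RQ = edge_rel H \<inter> Q \<times> Q"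
  have vq: "v \<noteq> q" using assms(6) by (auto simp: nbr_def)
  have Sub: "Tcomp s u v \<subseteq> Tcomp s v q" if "u \<in> N - {q}" for u
  proof
    fix x assume "x \<in> Tcomp s u v"
    then have x: "x \<in> A" "(u,x) \<in> RB\<^sup>*" unfolding Tc RB_def B_def by auto
    have "(v,x) \<in> RQ\<^sup>* \<and> x \<noteq> q" using x(2)
    proof (induction rule: rtrancl_induct)
      case base
      have "u \<noteq> q" "u \<in> A" "{v,u} \<in> H" "u \<noteq> v" using that NA unfolding N_def nbr_def by auto
      then have "(v,u) \<in> RQ" using vq assms(5) unfolding RQ_def Q_def A_def by (auto simp: edge_rel_iff)
      then show ?case using \<open>u \<noteq> q\<close> by auto
    next
      case (step y z)
      have "z \<in> Tcomp s u v" using step(1,2) unfolding Tc RB_def B_def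
        by (auto intro: rtrancl.rtrancl_into_rtrancl)
      then have "z \<noteq> q" using P[of u q] that qN by auto
      then have "(y,z) \<in> RQ" using step(2,3) unfolding RB_def RQ_def B_def Q_def by auto
      then show ?case using step(3) \<open>z \<noteq> q\<close> by (meson rtrancl.rtrancl_into_rtrancl)
    qed
    then show "x \<in> Tcomp s v q" using x(1) unfolding Tc RQ_def Q_def by auto
  qed
  have Disj: "\<forall>i\<in>N - {q}. \<forall>j\<in>N - {q}. i \<noteq> j \<longrightarrow> Tcomp s i v \<inter> Tcomp s j v = {}"
  proof (intro ballI impI)
    fix i j assume ij: "i \<in> N - {q}" "j \<in> N - {q}" "i \<noteq> j"
    show "Tcomp s i v \<inter> Tcomp s j v = {}"
    proof (rule ccontr)
      assume "Tcomp s i v \<inter> Tcomp s j v \<noteq> {}"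
      then obtain x where ix: "(i,x) \<in> RB\<^sup>*" and jx: "(j,x) \<in> RB\<^sup>*" unfolding Tc RB_def B_def by blast
      have "(x,j) \<in> RB\<^sup>*" using jx unfolding RB_def by (rule rtrancl_edge_sym2)
      with ix have "(i,j) \<in> RB\<^sup>*" by (rule rtrancl_trans)
      moreover have "j \<in> B" using ij NA unfolding B_def by auto
      ultimately have "j \<in> Tcomp s i v" unfolding Tc RB_def B_def by auto
      then show False using P ij by blast
    qed
  qed
  have finT: "finite (Tcomp s x y)" for x y unfolding Tc using finA by auto
  define f where "f u = Wt s (Tcomp s u v)" for u
  have "wt s v + (\<Sum>u\<in>N - {q}. f u) = Wt s ({v} \<union> (\<Union>u\<in>N - {q}. Tcomp s u v))"
  proof -
    have "v \<notin> (\<Union>u\<in>N - {q}. Tcomp s u v)" unfolding Tc by auto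
    then have "Wt s ({v} \<union> (\<Union>u\<in>N - {q}. Tcomp s u v)) = wt s v + Wt s (\<Union>u\<in>N - {q}. Tcomp s u v)"
      unfolding Wt_def using finN finT by (subst sum.union_disjoint) auto
    also have "Wt s (\<Union>u\<in>N - {q}. Tcomp s u v) = (\<Sum>u\<in>N - {q}. f u)"
      unfolding Wt_def f_def using finN finT Disj by (subst sum.UNION_disjoint) auto
    finally show ?thesis by simp
  qed
  also have "\<dots> \<le> Wt s (Tcomp s v q)"
  proof -
    have "v \<in> Tcomp s v q" unfolding Tc using assms(5) vq A_def by auto
    then have "{v} \<union> (\<Union>u\<in>N - {q}. Tcomp s u v) \<subseteq> Tcomp s v q" using Sub by blast
    then show ?thesis unfolding Wt_def by (rule sum_mono2[OF finT]) auto
  qed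
  finally have main: "wt s v + (\<Sum>u\<in>N - {q}. f u) \<le> Wt s (Tcomp s v q)" .
  have sumN: "(\<Sum>u\<in>N. f u) = f q + (\<Sum>u\<in>N - {q}. f u)" using finN qN by (rule sum.remove)
  have "f q \<le> Max (insert 0 (f ` N))" using finN qN by (intro Max_ge) auto
  moreover have "rem s v = (\<Sum>u\<in>N. f u) - Max (insert 0 (f ` N)) + wt s v"
    unfolding rem_def f_def N_def H_def ..
  ultimately show ?thesis using main sumN by linarith
qed

end
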